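(* Let $h$ be a positive integer and $L$ an $h$-modular lattice with zero. Let $x\in\mathcal{A}'$ and let $n,k$ be nonnegative integers. If $k\geq n$, then $x^{(k+1)}(a_n)=x^{(k)}(a_n)$ and $x^{(k+1)}(b_n)=x^{(k)}(b_n)$.
   Context: $K$ is the lattice consisting of $\varnothing$, $C=\{c\}$, $A_m=\{a_k:k\geq m\}$, $B_n=\{b_k:k\geq n\}$ ($m,n<\omega$), and $C\cup A_m\cup B_n$ with $|m-n|\leq1$, ordered by inclusion; $a_n,b_n,c$ denote $A_n,B_n,C$, so $\mathrm{J}(K)=\{c\}\cup\{a_n\}\cup\{b_n\}$ with $a_0>a_1>\cdots$, $b_0>b_1>\cdots$ and no other comparabilities. $\mathcal{A}$ is the set of antitone maps $x\colon\mathrm{J}(K)\to L$ with finite range. For $x\in\mathcal{A}$, $x(a_\infty)$, $x(b_\infty)$ are the eventual values of the increasing sequences $(x(a_n))$, $(x(b_n))$. The map $x^{(1)}$ is defined by $x^{(1)}(c)=x(c)\vee(x(a_\infty)\wedge x(b_\infty))$, $x^{(1)}(a_0)=x(a_0)$, $x^{(1)}(b_0)=x(b_0)$, $x^{(1)}(a_{n+1})=x(a_{n+1})\vee(x(b_n)\wedge x(c))$, $x^{(1)}(b_{n+1})=x(b_{n+1})\vee(x(a_n)\wedge x(c))$; $\mathcal{A}$ is closed under $x\mapsto x^{(1)}$, and $x^{(0)}=x$, $x^{(k+1)}=(x^{(k)})^{(1)}$. Put $\ell(x)=\langle x(a_\infty),x(b_\infty),x(c)\rangle$ and $\mathcal{A}'=\{x\in\mathcal{A}:\ell(x^{(1)})=\ell(x)\}$.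 $L$ is $h$-modular if $u^{(h+1)}=u^{(h)}$ for all $u\in L^3$, where $\langle x,y,z\rangle^{(1)}=\langle x\vee(y\wedge z),y\vee(x\wedge z),z\vee(x\wedge y)\rangle$. *)

theory Defs
  imports Main
begin

text \<open>Join-irreducibles of K: c, a_n, b_n.\<close>
datatype jk = C | A nat | B nat

fun jk_le :: "jk \<Rightarrow> jk \<Rightarrow> bool" where
  "jk_le C C = True"
| "jk_le (A m) (A n) = (n \<le> m)"
| "jk_le (B m) (B n) = (n \<le> m)"
| "jk_le _ _ = False"

definition in_A :: "(jk \<Rightarrow> 'a::bounded_lattice_bot) \<Rightarrow> bool" where
  "in_A x \<longleftrightarrow> (\<forall>p q. jk_le p q \<longrightarrow> x q \<le> x p) \<and> finite (range x)"

definition eventual :: "(nat \<Rightarrow> 'a) \<Rightarrow> 'a" where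
  "eventual f = (THE v. \<exists>N. \<forall>n\<ge>N. f n = v)"

definition x_ainf :: "(jk \<Rightarrow> 'a::bounded_lattice_bot) \<Rightarrow> 'a" where
  "x_ainf x = eventual (\<lambda>n. x (A n))"

definition x_binf :: "(jk \<Rightarrow> 'a::bounded_lattice_bot) \<Rightarrow> 'a" where
  "x_binf x = eventual (\<lambda>n. x (B n))"

fun step1 :: "(jk \<Rightarrow> 'a::bounded_lattice_bot) \<Rightarrow> jk \<Rightarrow> 'a" where
  "step1 x C = sup (x C) (inf (x_ainf x) (x_binf x))"
| "step1 x (A 0) = x (A 0)"
| "step1 x (B 0) = x (B 0)"
| "step1 x (A (Suc n)) = sup (x (A (Suc n))) (inf (x (B n)) (x C))"
| "step1 x (B (Suc n)) = sup (x (B (Suc n))) (inf (x (A n)) (x C))"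

definition ell :: "(jk \<Rightarrow> 'a::bounded_lattice_bot) \<Rightarrow> 'a \<times> 'a \<times> 'a" where
  "ell x = (x_ainf x, x_binf x, x C)"

definition in_A' :: "(jk \<Rightarrow> 'a::bounded_lattice_bot) \<Rightarrow> bool" where
  "in_A' x \<longleftrightarrow> in_A x \<and> ell (step1 x) = ell x"

fun tstep :: "'a::lattice \<times> 'a \<times> 'a \<Rightarrow> 'a \<times> 'a \<times> 'a" where
  "tstep (x, y, z) = (sup x (inf y z), sup y (inf x z), sup z (inf x y))"

definition h_modular :: "nat \<Rightarrow> 'a::lattice itself \<Rightarrow> bool" where
  "h_modular h _ \<longleftrightarrow> (\<forall>u::'a \<times> 'a \<times> 'a. (tstep ^^ (h+1)) u = (tstep ^^ h) u)"

end

theory Submission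
  imports Defs "HOL-Library.Infinite_Set"
begin

lemma ev_eq:
  assumes "\<forall>n\<ge>N. f n = v" shows "eventual f = v"
  unfolding eventual_def
proof (rule the_equality)
  show "\<exists>N. \<forall>n\<ge>N. f n = v" using assms by blast
next
  fix w assume "\<exists>N. \<forall>n\<ge>N. f n = w"
  then obtain M where M: "\<forall>n\<ge>M. f n = w" by blast
  have "f (max N M) = v" using assms by simp
  moreover have "f (max N M) = w" using M by simp
  ultimately show "w = v" by simp
qed

lemma ev_exists:
  fixes f :: "nat \<Rightarrow> 'a::order"
  assumes mono: "\<And>m n. m \<le> n \<Longrightarrow> f m \<le> f n" and fin: "finite (range f)"
  shows "\<exists>N v. \<forall>n\<ge>N. f n = v"
proof -
  have "\<exists>y\<in>range f. infinite (f -` {y})"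
    using inf_img_fin_dom[OF fin] by auto
  then obtain v where inf: "infinite {n. f n = v}"
    by (auto simp: vimage_def)
  then obtain N where N: "f N = v"
    by (metis (mono_tags, lifting) finite.emptyI mem_Collect_eq not_finite_existsD)
  have "\<forall>n\<ge>N. f n = v"
  proof (intro allI impI)
    fix n assume "n \<ge> N"
    from inf obtain m where "m \<ge> n" "f m = v"
      using infinite_nat_iff_unbounded_le by auto
    then have "f n \<le> v" using mono by metis
    moreover have "v \<le> f n" using N mono \<open>n \<ge> N\<close> by metis
    ultimately show "f n = v" by simp
  qed
  thus ?thesis by blast
qed

lemma step1_infl: "(y::jk \<Rightarrow> 'a::bounded_lattice_bot) p \<le> step1 y p"
  proof (cases p)
  case (A n) then show ?thesis by (cases n) auto
next
  case (B n) then show ?thesis by (cases n) auto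
qed auto

lemma funpow_mono_k:
  fixes x :: "jk \<Rightarrow> 'a::bounded_lattice_bot"
  assumes "j \<le> k" shows "(step1 ^^ j) x p \<le> (step1 ^^ k) x p"
  using assms
proof (induction k)
  case 0 then show ?case by simp
next
  case (Suc k)
  show ?case
  proof (cases "j = Suc k")
    case False
    then have "(step1 ^^ j) x p \<le> (step1 ^^ k) x p" using Suc by simp
    also have "\<dots> \<le> (step1 ^^ Suc k) x p" using step1_infl by simp
    finally show ?thesis .
  qed simp
qed

theorem lemma5p5:
  fixes h :: nat and x :: "jk \<Rightarrow> 'a::bounded_lattice_bot" and n k :: nat
  assumes "h > 0"
    and "h_modular h TYPE('a)"
    and "in_A' x"
    and "k \<ge> n"
  shows "(step1 ^^ (k+1)) x (A n) = (step1 ^^ k) x (A n)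
       \<and> (step1 ^^ (k+1)) x (B n) = (step1 ^^ k) x (B n)"
proof -
  define y where "y k = (step1 ^^ k) x" for k
  define \<alpha> where "\<alpha> = x_ainf x"
  define \<beta> where "\<beta> = x_binf x"
  define \<gamma> where "\<gamma> = x C"
  have ysuc: "y (Suc k) = step1 (y k)" for k by (simp add: y_def)
  have inA: "in_A x" and ell: "ell (step1 x) = ell x" using assms(3) by (auto simp: in_A'_def)
  have monoA: "x (A m) \<le> x (A n)" if "m \<le> n" for m n
    using inA that unfolding in_A_def by (metis jk_le.simps(2))
  have monoB: "x (B m) \<le> x (B n)" if "m \<le> n" for m n
    using inA that unfolding in_A_def by (metis jk_le.simps(3))
  have finA: "finite (range (\<lambda>n. x (A n)))"
    using inA unfolding in_A_def by (metis finite_subset image_subset_iff rangeI)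
  have finB: "finite (range (\<lambda>n. x (B n)))"
    using inA unfolding in_A_def by (metis finite_subset image_subset_iff rangeI)
  obtain N1 v1 where N1: "\<forall>n\<ge>N1. x (A n) = v1"
    using ev_exists[of "\<lambda>n. x (A n)", OF monoA finA] by blast
  obtain N2 v2 where N2: "\<forall>n\<ge>N2. x (B n) = v2"
    using ev_exists[of "\<lambda>n. x (B n)", OF monoB finB] by blast
  have v1: "v1 = \<alpha>" using ev_eq[OF N1] by (simp add: \<alpha>_def x_ainf_def)
  have v2: "v2 = \<beta>" using ev_eq[OF N2] by (simp add: \<beta>_def x_binf_def)
  define N where "N = max N1 N2"
  have xA: "\<forall>n\<ge>N. x (A n) = \<alpha>" and xB: "\<forall>n\<ge>N. x (B n) = \<beta>"
    using N1 N2 v1 v2 by (auto simp: N_def)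
  have sA: "\<forall>n\<ge>Suc N. step1 x (A n) = sup \<alpha> (inf \<beta> \<gamma>)"
  proof (intro allI impI)
    fix n assume "n \<ge> Suc N"
    then obtain m where "n = Suc m" "m \<ge> N" by (cases n) auto
    then show "step1 x (A n) = sup \<alpha> (inf \<beta> \<gamma>)" using xA xB by (simp add: \<gamma>_def)
  qed
  have sB: "\<forall>n\<ge>Suc N. step1 x (B n) = sup \<beta> (inf \<alpha> \<gamma>)"
  proof (intro allI impI)
    fix n assume "n \<ge> Suc N"
    then obtain m where "n = Suc m" "m \<ge> N" by (cases n) auto
    then show "step1 x (B n) = sup \<beta> (inf \<alpha> \<gamma>)" using xA xB by (simp add: \<gamma>_def)
  qed
  have e1: "x_ainf (step1 x) = \<alpha>" and e2: "x_binf (step1 x) = \<beta>" and e3: "step1 x C = \<gamma>"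
    using ell by (auto simp: ell_def \<alpha>_def \<beta>_def \<gamma>_def)
  have "x_ainf (step1 x) = sup \<alpha> (inf \<beta> \<gamma>)" using ev_eq[OF sA] by (simp add: x_ainf_def)
  with e1 have c1: "inf \<beta> \<gamma> \<le> \<alpha>" by (simp add: le_iff_sup sup_commute)
  have "x_binf (step1 x) = sup \<beta> (inf \<alpha> \<gamma>)" using ev_eq[OF sB] by (simp add: x_binf_def)
  with e2 have c2: "inf \<alpha> \<gamma> \<le> \<beta>" by (simp add: le_iff_sup sup_commute)
  have "step1 x C = sup \<gamma> (inf \<alpha> \<beta>)" by (simp add: \<gamma>_def \<alpha>_def \<beta>_def)
  with e3 have c3: "inf \<alpha> \<beta> \<le> \<gamma>" by (simp add: le_iff_sup sup_commute)
  have inv: "(\<exists>M. \<forall>n\<ge>M. y k (A n) = \<alpha> \<and> y k (B n) = \<beta>) \<and> y k C = \<gamma>" for k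
  proof (induction k)
    case 0 then show ?case using xA xB by (auto simp: y_def \<gamma>_def)
  next
    case (Suc k)
    then obtain M where M: "\<forall>n\<ge>M. y k (A n) = \<alpha> \<and> y k (B n) = \<beta>" and yc: "y k C = \<gamma>" by blast
    have MA: "\<forall>n\<ge>M. y k (A n) = \<alpha>" and MB: "\<forall>n\<ge>M. y k (B n) = \<beta>" using M by auto
    have ai: "x_ainf (y k) = \<alpha>" using ev_eq[OF MA] by (simp add: x_ainf_def)
    have bi: "x_binf (y k) = \<beta>" using ev_eq[OF MB] by (simp add: x_binf_def)
    have "\<forall>n\<ge>Suc M. y (Suc k) (A n) = \<alpha> \<and> y (Suc k) (B n) = \<beta>"
    proof (intro allI impI)
      fix n assume "n \<ge> Suc M"
      then obtain m where "n = Suc m" "m \<ge> M" by (cases n) auto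
      then show "y (Suc k) (A n) = \<alpha> \<and> y (Suc k) (B n) = \<beta>"
        using M yc c1 c2 by (simp add: ysuc sup_absorb1)
    qed
    moreover have "y (Suc k) C = \<gamma>" using yc ai bi c3 by (simp add: ysuc sup_absorb1)
    ultimately show ?case by blast
  qed
  have yC: "y k C = \<gamma>" for k using inv by blast
  have ymono: "j \<le> k \<Longrightarrow> y j p \<le> y k p" for j k p
    unfolding y_def by (rule funpow_mono_k)
  have main: "\<forall>k\<ge>n. y (Suc k) (A n) = y k (A n) \<and> y (Suc k) (B n) = y k (B n)" for n
  proof (induction n)
    case 0 then show ?case by (simp add: ysuc)
  next
    case (Suc m)
    have stabA: "k \<ge> m \<Longrightarrow> y k (A m) = y m (A m)" for k
    proof (induction k rule: dec_induct)
      case (step k) then show ?case using Suc.IH by simp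
    qed simp
    have stabB: "k \<ge> m \<Longrightarrow> y k (B m) = y m (B m)" for k
    proof (induction k rule: dec_induct)
      case (step k) then show ?case using Suc.IH by simp
    qed simp
    show ?case
    proof (intro allI impI)
      fix k assume k: "k \<ge> Suc m"
      have gA: "inf (y m (B m)) \<gamma> \<le> y k (A (Suc m))"
      proof -
        have "inf (y m (B m)) \<gamma> \<le> y (Suc m) (A (Suc m))"
          using yC[of m] by (simp add: ysuc)
        also have "\<dots> \<le> y k (A (Suc m))" using ymono k by blast
        finally show ?thesis .
      qed
      have gB: "inf (y m (A m)) \<gamma> \<le> y k (B (Suc m))"
      proof -
        have "inf (y m (A m)) \<gamma> \<le> y (Suc m) (B (Suc m))"
          using yC[of m] by (simp add: ysuc)
        also have "\<dots> \<le> y k (B (Suc m))" using ymono k by blast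
        finally show ?thesis .
      qed
      show "y (Suc k) (A (Suc m)) = y k (A (Suc m)) \<and> y (Suc k) (B (Suc m)) = y k (B (Suc m))"
        using gA gB stabA[of k] stabB[of k] yC[of k] k
        by (simp add: ysuc sup_absorb1)
    qed
  qed
  show ?thesis using main[of n] assms(4) by (simp add: y_def)
qed

end
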